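(* Let $K\subset\mathbb{R}^n$ be a nonempty compact convex set and let $\{H_m\}_{m\in\mathbb{N}}$ be a sequence of linear subspaces of $\mathbb{R}^n$ (not necessarily of the same dimension) such that the sequence \[K_m:=M_{H_m}\cdots M_{H_1}K\] converges in the Hausdorff metric to a compact convex set $L$. Then for every nonempty compact set $\tilde K\subset\mathbb{R}^n$ with $\mathrm{conv}(\tilde K)=K$, the sequence $\tilde K_m:=M_{H_m}\cdots M_{H_1}\tilde K$ also converges in the Hausdorff metric to $L$.
   Context: For a linear subspace $H$, $R_Hx=2(x|H)-x$ is the reflection with respect to $H$ ($x|H$ the orthogonal projection). The Minkowski symmetrization is $M_HC:=\frac12(C+R_HC)$, with $X+Y=\{x+y:x\in X,y\in Y\}$ and $tX=\{tx:x\in X\}$. $\mathrm{conv}$ denotes convex hull. *)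

theory Defs
  imports "HOL-Analysis.Analysis"
begin

definition orth_proj :: "'a::euclidean_space set \<Rightarrow> 'a \<Rightarrow> 'a" where
  "orth_proj H x = (THE p. p \<in> H \<and> (\<forall>h\<in>H. (x - p) \<bullet> h = 0))"

definition refl_sub :: "'a::euclidean_space set \<Rightarrow> 'a \<Rightarrow> 'a" where
  "refl_sub H x = 2 *\<^sub>R orth_proj H x - x"

definition mink_sym :: "'a::euclidean_space set \<Rightarrow> 'a set \<Rightarrow> 'a set" where
  "mink_sym H C = (\<lambda>v. (1/2) *\<^sub>R v) ` {x + y | x y. x \<in> C \<and> y \<in> refl_sub H ` C}"

text \<open>Iterated symmetrization: sym_iter H K m = M_{H m} ... M_{H 1} K
  (H 0 is unused; sym_iter H K 0 = K).\<close>
primrec sym_iter :: "(nat \<Rightarrow> 'a::euclidean_space set) \<Rightarrow> 'a set \<Rightarrow> nat \<Rightarrow> 'a set" where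
  "sym_iter H K 0 = K"
| "sym_iter H K (Suc m) = mink_sym (H (Suc m)) (sym_iter H K m)"

text \<open>Hausdorff distance (for nonempty bounded sets).\<close>
definition hausdorff_dist :: "'a::metric_space set \<Rightarrow> 'a set \<Rightarrow> real" where
  "hausdorff_dist A B = max (SUP a\<in>A. infdist a B) (SUP b\<in>B. infdist b A)"

end

theory Submission
  imports Defs
begin

lemma proj_exists:
  fixes H :: "'a::euclidean_space set"
  assumes "subspace H"
  shows "\<exists>p. p \<in> H \<and> (\<forall>h\<in>H. (x - p) \<bullet> h = 0)"
proof -
  obtain y z where "y \<in> span H" "\<And>w. w \<in> span H \<Longrightarrow> orthogonal z w" "x = y + z"
    using orthogonal_subspace_decomp_exists by blast
  moreover have "span H = H" using assms span_eq_iff by blast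
  ultimately show ?thesis
    by (intro exI[of _ y]) (auto simp: orthogonal_def span_base)
qed

lemma proj_unique:
  fixes H :: "'a::euclidean_space set"
  assumes "subspace H" "p \<in> H" "\<forall>h\<in>H. (x - p) \<bullet> h = 0"
    "q \<in> H" "\<forall>h\<in>H. (x - q) \<bullet> h = 0"
  shows "p = q"
proof -
  have d: "p - q \<in> H" using assms subspace_diff by blast
  have "(x - q) \<bullet> (p - q) - (x - p) \<bullet> (p - q) = 0" using assms d by simp
  then have "(p - q) \<bullet> (p - q) = 0" by (simp add: inner_diff_left)
  then show ?thesis by simp
qed

lemma proj_char:
  fixes H :: "'a::euclidean_space set"
  assumes "subspace H"
  shows "orth_proj H x \<in> H \<and> (\<forall>h\<in>H. (x - orth_proj H x) \<bullet> h = 0)"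
proof -
  obtain p where p: "p \<in> H \<and> (\<forall>h\<in>H. (x - p) \<bullet> h = 0)" using proj_exists[OF assms] by blast
  show ?thesis unfolding orth_proj_def
    by (rule theI[of _ p]) (use p proj_unique[OF assms] in blast)+
qed

lemma proj_eq:
  fixes H :: "'a::euclidean_space set"
  assumes "subspace H" "p \<in> H" "\<forall>h\<in>H. (x - p) \<bullet> h = 0"
  shows "orth_proj H x = p"
  using proj_unique[OF assms(1) _ _ assms(2,3)] proj_char[OF assms(1)] by blast

lemma proj_add:
  fixes H :: "'a::euclidean_space set"
  assumes "subspace H"
  shows "orth_proj H (x + y) = orth_proj H x + orth_proj H y"
proof (rule proj_eq[OF assms])
  show "orth_proj H x + orth_proj H y \<in> H"
    using proj_char[OF assms] assms subspace_add by blast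
  show "\<forall>h\<in>H. (x + y - (orth_proj H x + orth_proj H y)) \<bullet> h = 0"
  proof
    fix h assume "h \<in> H"
    then have "(x - orth_proj H x) \<bullet> h = 0" "(y - orth_proj H y) \<bullet> h = 0"
      using proj_char[OF assms] by blast+
    then show "(x + y - (orth_proj H x + orth_proj H y)) \<bullet> h = 0"
      by (simp add: algebra_simps inner_add_left inner_diff_left)
  qed
qed

lemma proj_scale:
  fixes H :: "'a::euclidean_space set"
  assumes "subspace H"
  shows "orth_proj H (c *\<^sub>R x) = c *\<^sub>R orth_proj H x"
proof (rule proj_eq[OF assms])
  show "c *\<^sub>R orth_proj H x \<in> H"
    using proj_char[OF assms] assms subspace_scale by blast
  show "\<forall>h\<in>H. (c *\<^sub>R x - c *\<^sub>R orth_proj H x) \<bullet> h = 0"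
  proof
    fix h assume "h \<in> H"
    then have "(x - orth_proj H x) \<bullet> h = 0"
      using proj_char[OF assms] by blast
    then show "(c *\<^sub>R x - c *\<^sub>R orth_proj H x) \<bullet> h = 0"
      by (metis inner_scaleR_left mult_zero_right scaleR_right_diff_distrib)
  qed
qed

lemma proj_idem:
  fixes H :: "'a::euclidean_space set"
  assumes "subspace H" "p \<in> H"
  shows "orth_proj H p = p"
  using proj_eq[OF assms] by simp

lemma refl_linear:
  fixes H :: "'a::euclidean_space set"
  assumes "subspace H"
  shows "linear (refl_sub H)"
  by (rule linearI) (simp_all add: refl_sub_def proj_add[OF assms] proj_scale[OF assms] algebra_simps)

lemma proj_linear:
  fixes H :: "'a::euclidean_space set"
  assumes "subspace H"
  shows "linear (orth_proj H)"
  by (rule linearI) (simp_all add: proj_add[OF assms] proj_scale[OF assms])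

lemma refl_invol:
  fixes H :: "'a::euclidean_space set"
  assumes "subspace H"
  shows "refl_sub H (refl_sub H x) = x"
proof -
  have pH: "orth_proj H x \<in> H" using proj_char[OF assms] by blast
  have "orth_proj H (refl_sub H x) = 2 *\<^sub>R orth_proj H (orth_proj H x) - orth_proj H x"
    unfolding refl_sub_def
    using linear_diff[OF proj_linear[OF assms]] linear_scale[OF proj_linear[OF assms]] by metis
  also have "\<dots> = orth_proj H x" using proj_idem[OF assms pH] by (simp add: scaleR_2)
  finally show ?thesis by (simp add: refl_sub_def scaleR_2)
qed

lemma refl_norm:
  fixes H :: "'a::euclidean_space set"
  assumes "subspace H"
  shows "norm (refl_sub H x) = norm x"
proof -
  define p where "p = orth_proj H x"
  define z where "z = x - p"
  have "p \<in> H" "z \<bullet> p = 0" using proj_char[OF assms] unfolding p_def z_def by blast+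
  have x: "x = p + z" by (simp add: z_def)
  have r: "refl_sub H x = p - z" by (simp add: refl_sub_def p_def[symmetric] z_def scaleR_2)
  have "(norm (p - z))\<^sup>2 = (norm (p + z))\<^sup>2"
    unfolding power2_norm_eq_inner using \<open>z \<bullet> p = 0\<close>
    by (simp add: inner_add_left inner_add_right inner_diff_left inner_diff_right inner_commute)
  then have "(norm (refl_sub H x))\<^sup>2 = (norm x)\<^sup>2" using r x by simp
  then show ?thesis by simp
qed


lemma mink_mono: "C \<subseteq> D \<Longrightarrow> mink_sym H C \<subseteq> mink_sym H D"
  unfolding mink_sym_def by blast

lemma sym_iter_mono: "K' \<subseteq> K \<Longrightarrow> sym_iter H K' m \<subseteq> sym_iter H K m"
  by (induction m) (auto dest: mink_mono)

lemma mink_memI: "a \<in> C \<Longrightarrow> b \<in> C \<Longrightarrow> (1/2) *\<^sub>R (a + refl_sub H b) \<in> mink_sym H C"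
  unfolding mink_sym_def by blast

lemma mink_memE:
  assumes "x \<in> mink_sym H C"
  obtains u v where "u \<in> C" "v \<in> C" "x = (1/2) *\<^sub>R (u + refl_sub H v)"
  using assms unfolding mink_sym_def by blast

lemma mink_compact:
  fixes C :: "'a::euclidean_space set"
  assumes "subspace H" "compact C"
  shows "compact (mink_sym H C)"
proof -
  have "continuous_on C (refl_sub H)"
    using refl_linear[OF assms(1)] linear_continuous_on linear_conv_bounded_linear by blast
  then have "compact (refl_sub H ` C)" using compact_continuous_image assms(2) by blast
  then show ?thesis unfolding mink_sym_def
    using compact_scaling compact_sums assms(2) by blast
qed

lemma sym_iter_compact:
  assumes "\<And>m. subspace (H m)" "compact K"
  shows "compact (sym_iter H K m)"
  by (induction m) (simp_all add: assms mink_compact)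

lemma sym_iter_ne:
  assumes "K \<noteq> {}"
  shows "sym_iter H K m \<noteq> {}"
proof (induction m)
  case 0 then show ?case using assms by simp
next
  case (Suc m)
  then obtain a where "a \<in> sym_iter H K m" by blast
  then show ?case using mink_memI[of a _ a] by auto
qed

lemma approx_step:
  fixes c :: real
  assumes sub: "\<And>m. subspace (H m)"
    and base: "\<forall>x\<in>K. \<forall>s. \<exists>y\<in>K'. (norm (s + (y - x)))\<^sup>2 \<le> (norm s)\<^sup>2 + c"
  shows "\<forall>x\<in>sym_iter H K m. \<forall>s. \<exists>y\<in>sym_iter H K' m.
           (norm (s + (y - x)))\<^sup>2 \<le> (norm s)\<^sup>2 + c / 2 ^ m"
proof (induction m)
  case 0 then show ?case using base by simp
next
  case (Suc m)
  let ?R = "refl_sub (H (Suc m))"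
  have lin: "linear ?R" using refl_linear sub by blast
  show ?case
  proof (intro ballI allI)
    fix x s assume "x \<in> sym_iter H K (Suc m)"
    then obtain u v where uv: "u \<in> sym_iter H K m" "v \<in> sym_iter H K m"
      "x = (1/2) *\<^sub>R (u + ?R v)" by (auto elim: mink_memE)
    obtain a where a: "a \<in> sym_iter H K' m"
      "(norm (2 *\<^sub>R s + (a - u)))\<^sup>2 \<le> (norm (2 *\<^sub>R s))\<^sup>2 + c / 2 ^ m"
      using Suc uv(1) by blast
    define w where "w = 2 *\<^sub>R s + (a - u)"
    obtain b where b: "b \<in> sym_iter H K' m"
      "(norm (?R w + (b - v)))\<^sup>2 \<le> (norm (?R w))\<^sup>2 + c / 2 ^ m"
      using Suc uv(2) by blast
    define y where "y = (1/2) *\<^sub>R (a + ?R b)"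
    have y: "y \<in> sym_iter H K' (Suc m)" using mink_memI[OF a(1) b(1)] by (simp add: y_def)
    have rd: "?R (b - v) = ?R b - ?R v" using linear_diff[OF lin, of b v] .
    have "s + (y - x) = (1/2) *\<^sub>R (w + ?R (b - v))"
      unfolding y_def uv(3) w_def rd
      by (simp add: algebra_simps)
    also have "w + ?R (b - v) = ?R (?R w + (b - v))"
      using linear_add[OF lin] refl_invol sub by metis
    finally have e: "norm (s + (y - x)) = (1/2) * norm (?R w + (b - v))"
      using refl_norm[OF sub[of "Suc m"]] by simp
    have nw: "norm (?R w) = norm w" using refl_norm sub by blast
    have n2: "(norm (2 *\<^sub>R s))\<^sup>2 = 4 * (norm s)\<^sup>2" by (simp add: power2_eq_square)
    have "(norm (s + (y - x)))\<^sup>2 = (1/4) * (norm (?R w + (b - v)))\<^sup>2"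
      unfolding e by (simp add: power2_eq_square)
    also have "\<dots> \<le> (1/4) * ((norm w)\<^sup>2 + c / 2 ^ m)"
      using b(2) nw by simp
    also have "\<dots> \<le> (1/4) * (4 * (norm s)\<^sup>2 + c / 2 ^ m + c / 2 ^ m)"
      using a(2) n2 w_def by simp
    also have "\<dots> = (norm s)\<^sup>2 + c / 2 ^ Suc m" by (simp add: field_simps)
    finally show "\<exists>y\<in>sym_iter H K' (Suc m). (norm (s + (y - x)))\<^sup>2 \<le> (norm s)\<^sup>2 + c / 2 ^ Suc m"
      using y by blast
  qed
qed

lemma approx_base:
  fixes K' :: "'a::euclidean_space set"
  assumes "K' \<subseteq> cball 0 r"
  shows "\<forall>x\<in>convex hull K'. \<forall>s. \<exists>y\<in>K'. (norm (s + (y - x)))\<^sup>2 \<le> (norm s)\<^sup>2 + 4 * r\<^sup>2"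
proof (intro ballI allI)
  fix x s assume x: "x \<in> convex hull K'"
  have "\<exists>y\<in>K'. s \<bullet> (y - x) \<le> 0"
  proof (rule ccontr)
    assume "\<not> ?thesis"
    then have "K' \<subseteq> {z. s \<bullet> z > s \<bullet> x}" by (auto simp: inner_diff_right)
    then have "convex hull K' \<subseteq> {z. s \<bullet> z > s \<bullet> x}"
      by (rule hull_minimal) (rule convex_halfspace_gt)
    then show False using x by auto
  qed
  then obtain y where y: "y \<in> K'" "s \<bullet> (y - x) \<le> 0" by blast
  have "convex hull K' \<subseteq> cball 0 r" using assms by (rule hull_minimal) (rule convex_cball)
  then have "norm x \<le> r" "norm y \<le> r" using x y(1) assms by auto
  then have "norm (y - x) \<le> 2 * r" using norm_triangle_ineq4[of y x] by linarith
  moreover have "0 \<le> norm (y - x)" by simp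
  ultimately have d: "(norm (y - x))\<^sup>2 \<le> 4 * r\<^sup>2"
    by (metis power_mono power_mult_distrib four_x_squared mult.commute)
  have "(norm (s + (y - x)))\<^sup>2 = (norm s)\<^sup>2 + 2 * (s \<bullet> (y - x)) + (norm (y - x))\<^sup>2"
    unfolding power2_norm_eq_inner by (simp add: inner_add_left inner_add_right inner_commute)
  then show "\<exists>y\<in>K'. (norm (s + (y - x)))\<^sup>2 \<le> (norm s)\<^sup>2 + 4 * r\<^sup>2"
    using y d by (intro bexI[of _ y]) auto
qed


lemma hd_le:
  assumes "A \<noteq> {}" "B \<noteq> {}" "\<forall>a\<in>A. infdist a B \<le> e" "\<forall>b\<in>B. infdist b A \<le> e"
  shows "hausdorff_dist A B \<le> e"
  unfolding hausdorff_dist_def using assms by (simp add: cSUP_least)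

lemma bdd_infdist:
  fixes A B :: "'a::metric_space set"
  assumes "bounded A" "B \<noteq> {}"
  shows "bdd_above ((\<lambda>a. infdist a B) ` A)"
proof -
  obtain b where b: "b \<in> B" using assms by blast
  obtain e where e: "\<forall>y\<in>A. dist b y \<le> e" using assms(1) bounded_any_center by blast
  have "infdist a B \<le> e" if "a \<in> A" for a
    using infdist_le[OF b, of a] e that by (metis dist_commute order_trans)
  then show ?thesis by (intro bdd_aboveI2) auto
qed

lemma hd_ge1:
  assumes "a \<in> A" "bounded A" "B \<noteq> {}"
  shows "infdist a B \<le> hausdorff_dist A B"
  unfolding hausdorff_dist_def using cSUP_upper[OF assms(1) bdd_infdist[OF assms(2,3)]] by simp

lemma hd_ge2:
  assumes "b \<in> B" "bounded B" "A \<noteq> {}"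
  shows "infdist b A \<le> hausdorff_dist A B"
  unfolding hausdorff_dist_def using cSUP_upper[OF assms(1) bdd_infdist[OF assms(2,3)]] by simp

theorem corollary9:
  fixes K L :: "'a::euclidean_space set" and H :: "nat \<Rightarrow> 'a set"
  assumes "K \<noteq> {}" "compact K" "convex K"
    and "\<And>m. subspace (H m)"
    and "L \<noteq> {}" "compact L" "convex L"
    and "(\<lambda>m. hausdorff_dist (sym_iter H K m) L) \<longlonglongrightarrow> 0"
  shows "\<forall>K'. K' \<noteq> {} \<and> compact K' \<and> convex hull K' = K \<longrightarrow>
           (\<lambda>m. hausdorff_dist (sym_iter H K' m) L) \<longlonglongrightarrow> 0"
proof (intro allI impI)
  fix K' :: "'a set" assume K': "K' \<noteq> {} \<and> compact K' \<and> convex hull K' = K"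
  have hK: "convex hull K' = K" using K' by (rule conjunct2[OF conjunct2])
  have cK': "compact K'" using K' by (rule conjunct1[OF conjunct2])
  have neK': "K' \<noteq> {}" using K' by (rule conjunct1)
  have "bounded K'" using cK' compact_imp_bounded by blast
  then obtain r where r: "\<forall>y\<in>K'. dist 0 y \<le> r"
    using bounded_any_center by blast
  then have "K' \<subseteq> cball 0 r" by auto
  from approx_base[OF this] have base:
    "\<forall>x\<in>K. \<forall>s. \<exists>y\<in>K'. (norm (s + (y - x)))\<^sup>2 \<le> (norm s)\<^sup>2 + 4 * r\<^sup>2"
    unfolding hK .
  define c where "c = 4 * r\<^sup>2"
  have c0: "c \<ge> 0" by (simp add: c_def)
  define e where "e m = sqrt (c / 2 ^ m)" for m :: nat
  define d where "d m = hausdorff_dist (sym_iter H K m) L" for m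
  have sub': "K' \<subseteq> K" using hull_subset[of K' convex] unfolding hK .
  have bound: "norm (hausdorff_dist (sym_iter H K' m) L) \<le> d m + e m" for m
  proof -
    let ?A = "sym_iter H K m" and ?B = "sym_iter H K' m"
    have cA: "compact ?A" using sym_iter_compact[OF assms(4) assms(2)] .
    have cB: "compact ?B" using sym_iter_compact[OF assms(4) cK'] .
    have neA: "?A \<noteq> {}" using sym_iter_ne[OF assms(1)] .
    have neB: "?B \<noteq> {}" using sym_iter_ne[OF neK'] .
    have BA: "?B \<subseteq> ?A" using sym_iter_mono[OF sub'] by blast
    have close: "infdist z ?B \<le> e m" if "z \<in> ?A" for z
    proof -
      have "\<forall>s. \<exists>y\<in>?B. (norm (s + (y - z)))\<^sup>2 \<le> (norm s)\<^sup>2 + 4 * r\<^sup>2 / 2 ^ m"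
        using approx_step[OF assms(4) base, where m=m] that by (rule bspec)
      then obtain y where y: "y \<in> ?B" "(norm (0 + (y - z)))\<^sup>2 \<le> (norm (0::'a))\<^sup>2 + c / 2 ^ m"
        unfolding c_def by blast
      then have "norm (y - z) \<le> e m" unfolding e_def
        by (simp add: real_le_rsqrt)
      then show ?thesis using infdist_le[OF y(1), of z] by (simp add: dist_norm norm_minus_commute)
    qed
    have e0: "0 \<le> e m" by (simp add: e_def c0)
    have h1: "\<forall>a\<in>?B. infdist a L \<le> d m + e m"
    proof
      fix a assume "a \<in> ?B"
      then have "infdist a L \<le> d m" unfolding d_def
        using hd_ge1[of a ?A L] BA compact_imp_bounded[OF cA] assms(5) by blast
      then show "infdist a L \<le> d m + e m" using e0 by linarith
    qed
    have h2: "\<forall>b\<in>L. infdist b ?B \<le> d m + e m"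
    proof
      fix b assume b: "b \<in> L"
      obtain z where z: "z \<in> ?A" "infdist b ?A = dist b z"
        using infdist_attains_inf[OF compact_imp_closed[OF cA] neA] by blast
      have "infdist b ?A \<le> d m" unfolding d_def
        using hd_ge2[OF b compact_imp_bounded[OF assms(6)] neA] .
      then show "infdist b ?B \<le> d m + e m"
        using infdist_triangle[of b ?B z] close[OF z(1)] z(2) by linarith
    qed
    have "hausdorff_dist ?B L \<le> d m + e m" using hd_le[OF neB assms(5) h1 h2] .
    moreover have "0 \<le> hausdorff_dist ?B L"
    proof -
      obtain a where a: "a \<in> ?B" using neB by blast
      show ?thesis using hd_ge1[OF a compact_imp_bounded[OF cB] assms(5)] infdist_nonneg[of a L]
        by linarith
    qed
    ultimately show ?thesis by simp
  qed
  have "e \<longlonglongrightarrow> 0"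
  proof -
    have "(\<lambda>m. c / 2 ^ m) \<longlonglongrightarrow> 0" by (rule LIMSEQ_divide_realpow_zero) simp
    from tendsto_real_sqrt[OF this] show ?thesis unfolding e_def by simp
  qed
  have lim: "(\<lambda>m. d m + e m) \<longlonglongrightarrow> 0"
    using tendsto_add_zero[OF assms(8) \<open>e \<longlonglongrightarrow> 0\<close>] unfolding d_def .
  have ev: "\<forall>m. norm (hausdorff_dist (sym_iter H K' m) L) \<le> d m + e m"
    using bound by (rule allI)
  show "(\<lambda>m. hausdorff_dist (sym_iter H K' m) L) \<longlonglongrightarrow> 0"
    by (rule Lim_null_comparison[OF always_eventually[OF ev] lim])
qed

end
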